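(* Let $(\mathcal{G},S)$ be an instance of \textsc{Temporally Disjoint Walks} where $\mathcal{G}$ is a temporal line, and let $\mathcal{S}$ be a solution that minimizes the sum of the lengths of its walks among all solutions. Let $W\in\mathcal{S}$ be a temporal $(s,z)$-walk in which the transitions $(a,b,t),(b,a,t')$ with $t<t'$ are consecutive. Then there exists a temporal $(s',z')$-walk $W'\neq W$ in $\mathcal{S}$ such that $W'$ contains at least one of the transitions $(s',a',t'')$ or $(a',z',t'')$ for some vertex $a'$ and some $t''$ with $t<t''<t'$, where the distance between $a$ and $a'$ in the underlying path of $\mathcal{G}$ is at most $|S|$.
   Context: A temporal graph $\mathcal{G}=(V,E_1,\ldots,E_T)$ has vertex set $V$ and edge sets $E_1,\ldots,E_T\subseteq\binom{V}{2}$; it is a temporal line if its underlying graph $(V,\bigcup_i E_i)$ is a path. A temporal $(s,z)$-walk of length $k$ from $s=v_0$ to $z=v_k$ is a sequence of transitions $((v_{i-1},v_i,t_i))_{i=1}^k$ with $\{v_{i-1},v_i\}\in E_{t_i}$ and $t_1<\cdots<t_k$. It occupies $v_i$ during $[t_i,t_{i+1}]$ for $i\in[k-1]$, $v_0$ during $[t_1,t_1]$ and $v_k$ during $[t_k,t_k]$. Two temporal walks are temporally disjoint unless some vertex is occupied by both during intersecting time intervals. \textsc{Temporally Disjoint Walks} asks, given $\mathcal{G}$ and a multiset $S\subseteq V\times V$ of source-sink pairs, for pairwise temporally disjoint temporal $(s_i,z_i)$-walks, one for each $(s_i,z_i)\in S$; a solution $\mathcal{S}$ is such a family, and $|S|$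 is the number of source-sink pairs. *)

theory Defs
  imports Main
begin

(* A temporal graph is given by a vertex set V, a lifetime T and edge sets E t
   for t = 1..T (edge sets at other times are ignored). *)

type_synonym 'a transition = "'a \<times> 'a \<times> nat"

definition tsrc :: "'a transition \<Rightarrow> 'a" where "tsrc x = fst x"
definition ttgt :: "'a transition \<Rightarrow> 'a" where "ttgt x = fst (snd x)"
definition ttime :: "'a transition \<Rightarrow> nat" where "ttime x = snd (snd x)"

definition temporal_graph :: "'a set \<Rightarrow> nat \<Rightarrow> (nat \<Rightarrow> 'a set set) \<Rightarrow> bool" where
  "temporal_graph V T E \<longleftrightarrow> finite V \<and>
     (\<forall>t \<in> {1..T}. \<forall>e \<in> E t. \<exists>u v. e = {u, v} \<and> u \<noteq> v \<and> u \<in> V \<and> v \<in> V)"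

definition underlying_edges :: "nat \<Rightarrow> (nat \<Rightarrow> 'a set set) \<Rightarrow> 'a set set" where
  "underlying_edges T E = (\<Union>t \<in> {1..T}. E t)"

definition temporal_line :: "'a set \<Rightarrow> nat \<Rightarrow> (nat \<Rightarrow> 'a set set) \<Rightarrow> bool" where
  "temporal_line V T E \<longleftrightarrow> temporal_graph V T E \<and>
     (\<exists>p. distinct p \<and> set p = V \<and>
          underlying_edges T E = {{p ! i, p ! Suc i} | i. Suc i < length p})"

definition underlying_dist :: "nat \<Rightarrow> (nat \<Rightarrow> 'a set set) \<Rightarrow> 'a \<Rightarrow> 'a \<Rightarrow> nat" where
  "underlying_dist T E u v = (LEAST n. \<exists>p. length p = Suc n \<and> hd p = u \<and> last p = v \<and>
      (\<forall>i. Suc i < length p \<longrightarrow> {p ! i, p ! Suc i} \<in> underlying_edges T E))"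

definition temporal_walk ::
  "'a set \<Rightarrow> nat \<Rightarrow> (nat \<Rightarrow> 'a set set) \<Rightarrow> 'a \<Rightarrow> 'a \<Rightarrow> 'a transition list \<Rightarrow> bool" where
  "temporal_walk V T E s z W \<longleftrightarrow>
     (W = [] \<longrightarrow> s = z) \<and>
     (W \<noteq> [] \<longrightarrow> tsrc (hd W) = s \<and> ttgt (last W) = z) \<and>
     (\<forall>i < length W. {tsrc (W ! i), ttgt (W ! i)} \<in> E (ttime (W ! i))
                      \<and> 1 \<le> ttime (W ! i) \<and> ttime (W ! i) \<le> T) \<and>
     (\<forall>i. Suc i < length W \<longrightarrow> ttgt (W ! i) = tsrc (W ! Suc i)
                            \<and> ttime (W ! i) < ttime (W ! Suc i))"

(* occupation: triples (v, lo, hi) meaning the walk occupies v during [lo, hi] *)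
definition occupations :: "'a transition list \<Rightarrow> ('a \<times> nat \<times> nat) set" where
  "occupations W =
     (if W = [] then {} else
       {(tsrc (hd W), ttime (hd W), ttime (hd W)), (ttgt (last W), ttime (last W), ttime (last W))}
       \<union> {(ttgt (W ! i), ttime (W ! i), ttime (W ! Suc i)) | i. Suc i < length W})"

definition temporally_disjoint :: "'a transition list \<Rightarrow> 'a transition list \<Rightarrow> bool" where
  "temporally_disjoint W1 W2 \<longleftrightarrow>
     (\<forall>(v1, l1, h1) \<in> occupations W1. \<forall>(v2, l2, h2) \<in> occupations W2.
        v1 = v2 \<longrightarrow> \<not> (l1 \<le> h2 \<and> l2 \<le> h1))"

(* a solution for the source-sink pairs S (a list representing the multiset) is a
   list of walks, the i-th being an (s_i,z_i)-walk, pairwise temporally disjoint *)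
definition tdw_solution ::
  "'a set \<Rightarrow> nat \<Rightarrow> (nat \<Rightarrow> 'a set set) \<Rightarrow> ('a \<times> 'a) list \<Rightarrow> 'a transition list list \<Rightarrow> bool" where
  "tdw_solution V T E S Ws \<longleftrightarrow> length Ws = length S \<and>
     (\<forall>i < length S. temporal_walk V T E (fst (S ! i)) (snd (S ! i)) (Ws ! i)) \<and>
     (\<forall>i < length S. \<forall>j < length S. i \<noteq> j \<longrightarrow> temporally_disjoint (Ws ! i) (Ws ! j))"

definition total_length :: "'a transition list list \<Rightarrow> nat" where
  "total_length Ws = (\<Sum>W \<leftarrow> Ws. length W)"

end

theory Submission
  imports Defs
begin


lemma walk_mono:
  assumes "temporal_walk V T E s z W" "p < q" "q < length W"
  shows "ttime (W ! p) < ttime (W ! q)"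
  using assms(2,3)
proof (induction q)
  case 0 then show ?case by simp
next
  case (Suc q)
  have st: "ttime (W ! q) < ttime (W ! Suc q)" using assms(1) Suc.prems unfolding temporal_walk_def by blast
  show ?case
  proof (cases "p = q")
    case True then show ?thesis using st by simp
  next
    case False then have "p < q" using Suc.prems by simp
    then show ?thesis using Suc.IH Suc.prems st by simp
  qed
qed

lemma walk_mono_le:
  assumes "temporal_walk V T E s z W" "p \<le> q" "q < length W"
  shows "ttime (W ! p) \<le> ttime (W ! q)"
  using walk_mono[OF assms(1), of p q] assms(2,3) by (cases "p = q") auto

lemma occ_cases:
  assumes "(v,l,h) \<in> occupations W"
  shows "W \<noteq> [] \<and> ((v = tsrc (hd W) \<and> l = ttime (hd W) \<and> h = l) \<or> (v = ttgt (last W) \<and> l = ttime (last W) \<and> h = l) \<or> (\<exists>q. Suc q < length W \<and> v = ttgt (W!q) \<and> l = ttime (W!q) \<and> h = ttime (W ! Suc q)))"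
  using assms unfolding occupations_def by (auto split: if_splits)

lemma occ_hd: "W \<noteq> [] \<Longrightarrow> (tsrc (hd W), ttime (hd W), ttime (hd W)) \<in> occupations W"
  unfolding occupations_def by auto
lemma occ_last: "W \<noteq> [] \<Longrightarrow> (ttgt (last W), ttime (last W), ttime (last W)) \<in> occupations W"
  unfolding occupations_def by auto
lemma occ_idx: "Suc q < length W \<Longrightarrow> (ttgt (W!q), ttime (W!q), ttime (W!Suc q)) \<in> occupations W"
  unfolding occupations_def by auto

lemma occ_nonest:
  assumes w: "temporal_walk V T E s z W"
    and o1: "(v1,l1,h1) \<in> occupations W" and lh: "l1 < h1"
    and o2: "(v2,l2,h2) \<in> occupations W" and a1: "l1 < l2" and a2: "l2 < h1"
  shows False
proof -
  from occ_cases[OF o1] lh obtain p where p: "Suc p < length W" "l1 = ttime (W!p)" "h1 = ttime (W ! Suc p)" by auto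
  have ne: "W \<noteq> []" using p by auto
  have hd: "hd W = W!0" using ne by (simp add: hd_conv_nth)
  have lst: "last W = W ! (length W - 1)" using ne by (simp add: last_conv_nth)
  from occ_cases[OF o2] consider "l2 = ttime (hd W)" | "l2 = ttime (last W)" | q where "Suc q < length W" "l2 = ttime (W!q)" by blast
  then show False
  proof cases
    case 1
    have "ttime (W!0) \<le> ttime (W!p)" using walk_mono_le[OF w, of 0 p] p by simp
    then show False using 1 hd p a1 a2 by simp
  next
    case 2
    have "ttime (W!Suc p) \<le> ttime (W!(length W - 1))" using walk_mono_le[OF w, of "Suc p" "length W - 1"] p by simp
    then show False using 2 lst p a1 a2 by simp
  next
    case (3 q)
    consider "q \<le> p" | "Suc p \<le> q" by linarith
    then show False
      apply cases using walk_mono_le[OF w, of q p] walk_mono_le[OF w, of "Suc p" q] p 3 a1 a2 by simp_all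
  qed
qed

lemma total_length_update: "i < length Ws \<Longrightarrow> total_length (Ws[i := x]) + length (Ws!i) = total_length Ws + length x"
  unfolding total_length_def by (induction Ws arbitrary: i) (auto split: nat.splits)

lemma td_sym: "temporally_disjoint X Y \<longleftrightarrow> temporally_disjoint Y X"
  unfolding temporally_disjoint_def by fastforce

definition upath :: "nat \<Rightarrow> (nat \<Rightarrow> 'a set set) \<Rightarrow> 'a list \<Rightarrow> 'a \<Rightarrow> 'a \<Rightarrow> bool" where
 "upath T E p u v \<longleftrightarrow> p \<noteq> [] \<and> hd p = u \<and> last p = v \<and> (\<forall>i. Suc i < length p \<longrightarrow> {p!i, p!Suc i} \<in> underlying_edges T E)"

lemma upath_dist: "upath T E p u v \<Longrightarrow> underlying_dist T E u v \<le> length p - 1"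
  unfolding underlying_dist_def upath_def
  by (rule Least_le) (rule exI[of _ p], auto)

lemma upath_edge: "{u,v} \<in> underlying_edges T E \<Longrightarrow> upath T E [u,v] u v"
  unfolding upath_def by (auto simp: less_Suc_eq)

lemma upath_cons: "upath T E p c v \<Longrightarrow> {a,c} \<in> underlying_edges T E \<Longrightarrow> upath T E (a#p) a v"
  unfolding upath_def
  apply (auto simp: hd_conv_nth)
  subgoal for i by (cases i) (auto simp: hd_conv_nth)
  done

lemma walk_edge: "temporal_walk V T E s z W \<Longrightarrow> n < length W \<Longrightarrow> {tsrc (W!n), ttgt (W!n)} \<in> underlying_edges T E"
  unfolding temporal_walk_def underlying_edges_def by auto

lemma line_nb:
  assumes "temporal_line V T E" "{a,x} \<in> underlying_edges T E" "{a,y} \<in> underlying_edges T E"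
    "{a,b} \<in> underlying_edges T E" "x \<noteq> b" "y \<noteq> b"
  shows "x = y"
proof -
  obtain p where d: "distinct p" and ue: "underlying_edges T E = {{p!i, p!Suc i} | i. Suc i < length p}"
    using assms(1) unfolding temporal_line_def by blast
  obtain i0 where "{a,b} = {p!i0, p!Suc i0}" "Suc i0 < length p" using assms(4) ue by auto
  then obtain m where m: "m < length p" "a = p!m" by (metis Suc_lessD doubleton_eq_iff)
  have nb: "w = p!Suc m \<or> w = p!(m - 1)" if aw: "{a,w} \<in> underlying_edges T E" for w
  proof -
    obtain i where i: "{a,w} = {p!i, p!Suc i}" "Suc i < length p" using aw ue by auto
    then consider "a = p!i" "w = p!Suc i" | "a = p!Suc i" "w = p!i" by (auto simp: doubleton_eq_iff)
    then show ?thesis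
    proof cases
      case 1 then have "i = m" using m i d nth_eq_iff_index_eq by fastforce
      then show ?thesis using 1 by simp
    next
      case 2 then have "Suc i = m" using m i d nth_eq_iff_index_eq by fastforce
      then show ?thesis using 2 by auto
    qed
  qed
  show ?thesis using nb[OF assms(2)] nb[OF assms(3)] nb[OF assms(4)] assms(5,6) by metis
qed

lemma td_elim: "temporally_disjoint X Y \<Longrightarrow> (v,l1,h1) \<in> occupations X \<Longrightarrow> (v,l2,h2) \<in> occupations Y \<Longrightarrow> \<not> (l1 \<le> h2 \<and> l2 \<le> h1)"
  unfolding temporally_disjoint_def by fastforce



lemma remove_bounce:
  assumes w: "temporal_walk V T E s z W" and k: "Suc k < length W"
    and t1: "W ! k = (a,b,t)" and t2: "W ! Suc k = (b,a,t')"
  defines "W2 \<equiv> take k W @ drop (Suc (Suc k)) W"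
  shows "temporal_walk V T E s z W2 \<and> length W2 + 2 = length W \<and>
    (\<forall>v l h. (v,l,h) \<in> occupations W2 \<longrightarrow> (\<exists>l0 h0. (v,l0,h0) \<in> occupations W \<and> l0 \<le> l \<and> h \<le> h0)
       \<or> (v = a \<and> (a,l,t) \<in> occupations W \<and> (a,t',h) \<in> occupations W))"
proof -
  define f where "f n = (if n < k then n else Suc (Suc n))" for n
  have len: "length W2 = length W - 2" using k unfolding W2_def by simp
  have nth: "W2 ! n = W ! f n" if "n < length W2" for n
    using that k unfolding W2_def f_def len by (auto simp: nth_append min_def)
  have gt2: "Suc (Suc 0) < length W" if "W2 \<noteq> []" using that len by (cases W2) auto
  have fl: "f n < length W" if "n < length W2" for n using that len unfolding f_def by auto
  have wc: "\<And>i. Suc i < length W \<Longrightarrow> ttgt (W!i) = tsrc (W!Suc i) \<and> ttime (W!i) < ttime (W!Suc i)"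
    using w unfolding temporal_walk_def by blast
  have we: "\<And>i. i < length W \<Longrightarrow> {tsrc (W ! i), ttgt (W ! i)} \<in> E (ttime (W ! i))
                      \<and> 1 \<le> ttime (W ! i) \<and> ttime (W ! i) \<le> T"
    using w unfolding temporal_walk_def by blast
  have wne: "W \<noteq> []" using k by auto
  have ws: "tsrc (hd W) = s" and wz: "ttgt (last W) = z" using w wne unfolding temporal_walk_def by auto
  have hdW: "hd W = W!0" using wne by (simp add: hd_conv_nth)
  have lastW: "last W = W!(length W - 1)" using wne by (simp add: last_conv_nth)
  have k1: "tsrc (W!k) = a" "ttgt (W!k) = b" "ttime (W!k) = t" using t1 by (auto simp: tsrc_def ttgt_def ttime_def)
  have k2: "tsrc (W!Suc k) = b" "ttgt (W!Suc k) = a" "ttime (W!Suc k) = t'" using t2 by (auto simp: tsrc_def ttgt_def ttime_def)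
  have cons2: "ttgt (W2!n) = tsrc (W2!Suc n) \<and> ttime (W2!n) < ttime (W2!Suc n)" if n: "Suc n < length W2" for n
  proof (cases "Suc n < k \<or> k \<le> n")
    case True
    then have "f (Suc n) = Suc (f n)" unfolding f_def by auto
    then show ?thesis using nth[of n] nth[of "Suc n"] n wc[of "f n"] fl[of "Suc n"] by simp
  next
    case False
    then have nk: "Suc n = k" by auto
    have fn: "f n = n" "f (Suc n) = Suc (Suc k)" using nk unfolding f_def by auto
    have "ttgt (W!n) = a" using wc[of n] nk k k1 by simp
    moreover have "tsrc (W!Suc (Suc k)) = a" using wc[of "Suc k"] k2 n len nk by simp
    moreover have "ttime (W!n) < ttime (W ! Suc (Suc k))"
      using walk_mono[OF w, of n "Suc (Suc k)"] n len nk by simp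
    ultimately show ?thesis using nth[of n] nth[of "Suc n"] n fn by simp
  qed
  have walk2: "temporal_walk V T E s z W2"
    unfolding temporal_walk_def
  proof (intro conjI impI allI)
    assume "W2 = []"
    then have "length W = 2" "k = 0" using len k by auto
    then show "s = z" using ws wz hdW lastW k1 k2 by simp
  next
    assume ne: "W2 \<noteq> []"
    have h2: "hd W2 = W2!0" using ne by (simp add: hd_conv_nth)
    show "tsrc (hd W2) = s"
    proof (cases "k = 0")
      case True
      have "2 < length W" using ne len by (cases W2) auto
      then show ?thesis using True h2 nth[of 0] ne f_def ws hdW wc[of 1] k1 k2 len by auto
    next
      case False
      then show ?thesis using h2 nth[of 0] ne f_def ws hdW by auto
    qed
  next
    assume ne: "W2 \<noteq> []"
    have l2: "last W2 = W2!(length W2 - 1)" using ne by (simp add: last_conv_nth)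
    show "ttgt (last W2) = z"
    proof (cases "Suc (Suc k) < length W")
      case True
      then have "f (length W2 - 1) = length W - 1" using len ne unfolding f_def by auto
      then show ?thesis using l2 nth[of "length W2 - 1"] ne wz lastW by simp
    next
      case False
      then have kk: "length W = Suc (Suc k)" "k > 0" using k ne len by (auto simp flip: length_greater_0_conv)
      then have "f (length W2 - 1) = k - 1" using len unfolding f_def by auto
      moreover have "ttgt (W!(k-1)) = a" using wc[of "k-1"] kk k1 by simp
      ultimately show ?thesis using l2 nth[of "length W2 - 1"] ne wz lastW kk k2 by simp
    qed
  next
    fix i assume "i < length W2"
    then show "{tsrc (W2 ! i), ttgt (W2 ! i)} \<in> E (ttime (W2 ! i))" "1 \<le> ttime (W2 ! i)" "ttime (W2 ! i) \<le> T"
      using nth fl we by simp_all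
  next
    fix i assume "Suc i < length W2"
    then show "ttgt (W2 ! i) = tsrc (W2 ! Suc i)" "ttime (W2 ! i) < ttime (W2 ! Suc i)" using cons2 by auto
  qed
  have occ: "(\<exists>l0 h0. (v,l0,h0) \<in> occupations W \<and> l0 \<le> l \<and> h \<le> h0)
       \<or> (v = a \<and> (a,l,t) \<in> occupations W \<and> (a,t',h) \<in> occupations W)"
    if o: "(v,l,h) \<in> occupations W2" for v l h
  proof -
    have ne: "W2 \<noteq> []" using occ_cases[OF o] by blast
    have h2: "hd W2 = W2!0" using ne by (simp add: hd_conv_nth)
    have l2: "last W2 = W2!(length W2 - 1)" using ne by (simp add: last_conv_nth)
    from occ_cases[OF o] consider
      "v = tsrc (hd W2)" "l = ttime (hd W2)" "h = l"
      | "v = ttgt (last W2)" "l = ttime (last W2)" "h = l"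
      | q where "Suc q < length W2" "v = ttgt (W2!q)" "l = ttime (W2!q)" "h = ttime (W2 ! Suc q)"
      by blast
    then show ?thesis
    proof cases
      case 1
      show ?thesis
      proof (cases "k = 0")
        case True
        have g: "Suc (Suc 0) < length W" using gt2 ne by blast
        have e: "W2 ! 0 = W ! Suc (Suc 0)" using nth[of 0] ne True unfolding f_def by auto
        have o1: "(ttgt (W!1), ttime (W!1), ttime (W!Suc 1)) \<in> occupations W"
          by (rule occ_idx) (use g in auto)
        have "ttime (W!1) \<le> ttime (W!Suc 1)" using wc[of 1] g by simp
        moreover have "ttgt (W!1) = tsrc (W!Suc 1)" using wc[of 1] g by simp
        ultimately show ?thesis using 1 h2 e o1 by (auto simp: numeral_2_eq_2)
      next
        case False
        then show ?thesis using 1 h2 nth[of 0] ne f_def occ_hd[OF wne] hdW by auto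
      qed
    next
      case 2
      show ?thesis
      proof (cases "Suc (Suc k) < length W")
        case True
        then have "f (length W2 - 1) = length W - 1" using len ne unfolding f_def by auto
        then show ?thesis using 2 l2 nth[of "length W2 - 1"] ne occ_last[OF wne] lastW by auto
      next
        case False
        then have kk: "length W = Suc (Suc k)" "k > 0" using k ne len by (auto simp flip: length_greater_0_conv)
        then have "f (length W2 - 1) = k - 1" using len unfolding f_def by auto
        moreover have "(ttgt (W!(k-1)), ttime (W!(k-1)), ttime (W!Suc (k-1))) \<in> occupations W"
          by (rule occ_idx) (use kk in auto)
        moreover have "ttime (W!(k-1)) \<le> ttime (W!Suc (k-1))" using wc[of "k-1"] kk by simp
        ultimately show ?thesis using 2 l2 nth[of "length W2 - 1"] ne by auto
      qed
    next
      case (3 q)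
      show ?thesis
      proof (cases "Suc q < k \<or> k \<le> q")
        case True
        then have "f (Suc q) = Suc (f q)" unfolding f_def by auto
        moreover have "(ttgt (W!f q), ttime (W!f q), ttime (W!Suc (f q))) \<in> occupations W"
          by (rule occ_idx) (use fl[of "Suc q"] 3 calculation in auto)
        ultimately show ?thesis using 3 nth[of q] nth[of "Suc q"] by auto
      next
        case False
        then have nk: "Suc q = k" by auto
        have fn: "f q = q" "f (Suc q) = Suc (Suc k)" using nk unfolding f_def by auto
        have va: "ttgt (W!q) = a" using wc[of q] nk k k1 by simp
        have o1: "(ttgt (W!q), ttime (W!q), ttime (W!Suc q)) \<in> occupations W"
          by (rule occ_idx) (use nk k in auto)
        have o2: "(ttgt (W!Suc k), ttime (W!Suc k), ttime (W!Suc (Suc k))) \<in> occupations W"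
          by (rule occ_idx) (use 3 len nk in auto)
        show ?thesis using o1 o2 va k1 k2 nk fn 3 nth[of q] nth[of "Suc q"] by auto
      qed
    qed
  qed
  show ?thesis using walk2 len k occ by auto
qed


lemma conflict:
  assumes sol: "tdw_solution V T E S Ws"
    and opt: "\<And>Ws'. tdw_solution V T E S Ws' \<Longrightarrow> total_length Ws \<le> total_length Ws'"
    and i: "i < length S" and k: "Suc k < length (Ws ! i)"
    and tr1: "Ws ! i ! k = (a, b, t)" and tr2: "Ws ! i ! Suc k = (b, a, t')"
  shows "\<exists>j<length S. j \<noteq> i \<and> (\<exists>l2 h2. (a,l2,h2) \<in> occupations (Ws!j) \<and> t < l2 \<and> h2 < t')"
proof (rule ccontr)
  assume nc: "\<not> ?thesis"
  define W2 where "W2 = take k (Ws!i) @ drop (Suc (Suc k)) (Ws!i)"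
  have lenS: "length Ws = length S" using sol unfolding tdw_solution_def by blast
  have walks: "\<And>j. j < length S \<Longrightarrow> temporal_walk V T E (fst (S ! j)) (snd (S ! j)) (Ws ! j)"
    using sol unfolding tdw_solution_def by blast
  have disj: "\<And>p q. p < length S \<Longrightarrow> q < length S \<Longrightarrow> p \<noteq> q \<Longrightarrow> temporally_disjoint (Ws ! p) (Ws ! q)"
    using sol unfolding tdw_solution_def by blast
  note rb = remove_bounce[OF walks[OF i] k tr1 tr2, folded W2_def]
  have w2: "temporal_walk V T E (fst (S ! i)) (snd (S ! i)) W2" and l2: "length W2 + 2 = length (Ws!i)"
    using rb by auto
  have key: "temporally_disjoint W2 (Ws!j)" if j: "j < length S" "j \<noteq> i" for j
    unfolding temporally_disjoint_def
  proof (intro ballI, clarify)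
    fix v l1 h1 v2 l2 h2
    assume o1: "(v, l1, h1) \<in> occupations W2" and o2: "(v, l2, h2) \<in> occupations (Ws!j)"
      and c: "l1 \<le> h2" "l2 \<le> h1"
    have dij: "temporally_disjoint (Ws!i) (Ws!j)" using disj[OF i j(1)] j by auto
    from rb o1 consider "\<exists>l0 h0. (v,l0,h0) \<in> occupations (Ws!i) \<and> l0 \<le> l1 \<and> h1 \<le> h0"
      | "v = a" "(a,l1,t) \<in> occupations (Ws!i)" "(a,t',h1) \<in> occupations (Ws!i)" by blast
    then show False
    proof cases
      case 1
      then obtain l0 h0 where "(v,l0,h0) \<in> occupations (Ws!i)" "l0 \<le> l1" "h1 \<le> h0" by blast
      then show False using dij o2 c unfolding temporally_disjoint_def by fastforce
    next
      case 2
      have "\<not> (l1 \<le> h2 \<and> l2 \<le> t)" using dij o2 2 unfolding temporally_disjoint_def by fastforce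
      moreover have "\<not> (t' \<le> h2 \<and> l2 \<le> h1)" using dij o2 2 unfolding temporally_disjoint_def by fastforce
      ultimately have "t < l2" "h2 < t'" using c by auto
      then show False using nc o2 2 j by blast
    qed
  qed
  define Ws' where "Ws' = Ws[i := W2]"
  have "tdw_solution V T E S Ws'"
    unfolding tdw_solution_def
  proof (intro conjI allI impI)
    show "length Ws' = length S" using lenS unfolding Ws'_def by simp
  next
    fix j assume "j < length S"
    then show "temporal_walk V T E (fst (S ! j)) (snd (S ! j)) (Ws' ! j)"
      using w2 walks lenS unfolding Ws'_def by (cases "j = i") auto
  next
    fix p q assume pq: "p < length S" "q < length S" "p \<noteq> q"
    show "temporally_disjoint (Ws' ! p) (Ws' ! q)"
    proof (cases "p = i")
      case True then show ?thesis using key[of q] pq lenS unfolding Ws'_def by auto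
    next
      case False
      show ?thesis
      proof (cases "q = i")
        case True then show ?thesis using key[of p] pq lenS False td_sym unfolding Ws'_def by auto
      next
        case False2: False
        then show ?thesis using disj pq lenS False unfolding Ws'_def by auto
      qed
    qed
  qed
  then have "total_length Ws \<le> total_length Ws'" by (rule opt)
  moreover have "total_length Ws' + length (Ws!i) = total_length Ws + length W2"
    unfolding Ws'_def by (rule total_length_update) (use i lenS in simp)
  ultimately show False using l2 by simp
qed




lemma analyse:
  assumes line: "temporal_line V T E"
    and wi: "temporal_walk V T E si zi Wi" and ki: "Suc k < length Wi"
    and tr1: "Wi ! k = (a,b,t)" and tr2: "Wi ! Suc k = (b,a,t')"
    and wj: "temporal_walk V T E sj zj Wj" and dis: "temporally_disjoint Wi Wj"
    and o: "(a,l2,h2) \<in> occupations Wj" and lt: "t < l2" "h2 < t'"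
  shows "(\<exists>x l. t < l \<and> l < t' \<and> {a,x} \<in> underlying_edges T E \<and> ((sj,x,l) \<in> set Wj \<or> (x,zj,l) \<in> set Wj))
    \<or> (\<exists>q x. Suc q < length Wj \<and> Wj!q = (x,a,l2) \<and> Wj!Suc q = (a,x,h2) \<and> l2 < h2)"
proof -
  have ob: "(b,t,t') \<in> occupations Wi"
    using occ_idx[OF ki] tr1 tr2 by (simp add: tsrc_def ttgt_def ttime_def)
  have eab: "{a,b} \<in> underlying_edges T E" using walk_edge[OF wi, of k] ki tr1 by (simp add: tsrc_def ttgt_def)
  have nb: "\<not> (t \<le> h0 \<and> l0 \<le> t')" if "(b,l0,h0) \<in> occupations Wj" for l0 h0
    using td_elim[OF dis ob that] .
  have wc: "\<And>i. Suc i < length Wj \<Longrightarrow> ttgt (Wj!i) = tsrc (Wj!Suc i) \<and> ttime (Wj!i) < ttime (Wj!Suc i)"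
    using wj unfolding temporal_walk_def by blast
  have ne: "Wj \<noteq> []" using occ_cases[OF o] by blast
  have hdW: "hd Wj = Wj!0" using ne by (simp add: hd_conv_nth)
  have lastW: "last Wj = Wj!(length Wj - 1)" using ne by (simp add: last_conv_nth)
  have sj: "tsrc (hd Wj) = sj" and zj: "ttgt (last Wj) = zj" using wj ne unfolding temporal_walk_def by auto
  from occ_cases[OF o] consider
      "a = tsrc (hd Wj)" "l2 = ttime (hd Wj)" "h2 = l2"
    | "a = ttgt (last Wj)" "l2 = ttime (last Wj)" "h2 = l2"
    | q where "Suc q < length Wj" "a = ttgt (Wj!q)" "l2 = ttime (Wj!q)" "h2 = ttime (Wj ! Suc q)"
    by blast
  then show ?thesis
  proof cases
    case 1
    obtain u x tau where hx: "hd Wj = (u,x,tau)" by (cases "hd Wj") auto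
    have "{a,x} \<in> underlying_edges T E" using walk_edge[OF wj, of 0] ne hx 1 by (simp add: tsrc_def ttgt_def hdW)
    moreover have "(sj,x,l2) \<in> set Wj" using hx 1 sj ne hd_in_set[OF ne] by (simp add: tsrc_def ttime_def)
    ultimately show ?thesis using lt 1 by blast
  next
    case 2
    obtain x u tau where hx: "last Wj = (x,u,tau)" by (cases "last Wj") auto
    have "{x,a} \<in> underlying_edges T E" using walk_edge[OF wj, of "length Wj - 1"] ne hx 2 by (simp add: tsrc_def ttgt_def lastW)
    then have "{a,x} \<in> underlying_edges T E" by (simp add: insert_commute)
    moreover have "(x,zj,l2) \<in> set Wj" using hx 2 zj ne last_in_set[OF ne] by (simp add: ttgt_def ttime_def)
    ultimately show ?thesis using lt 2 by blast
  next
    case (3 q)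
    obtain x u tau where qx: "Wj!q = (x,u,tau)" by (cases "Wj!q") auto
    obtain u2 y tau2 where qy: "Wj!Suc q = (u2,y,tau2)" by (cases "Wj!Suc q") auto
    have "u = a" "tau = l2" using qx 3 by (simp_all add: ttgt_def ttime_def)
    have "u2 = a" "tau2 = h2" using qy 3 wc[of q] qx by (simp_all add: tsrc_def ttgt_def ttime_def)
    have lh: "l2 < h2" using wc[of q] 3 by simp
    have xb: "x \<noteq> b"
    proof
      assume xb: "x = b"
      show False
      proof (cases q)
        case 0
        have "(b, l2, l2) \<in> occupations Wj" using occ_hd[OF ne] hdW 0 qx xb 3 by (simp add: tsrc_def ttime_def)
        then show False using nb[of l2 l2] lt lh by linarith
      next
        case (Suc q0)
        have "(ttgt (Wj!q0), ttime (Wj!q0), ttime (Wj!Suc q0)) \<in> occupations Wj"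
          by (rule occ_idx) (use 3 Suc in auto)
        moreover have "ttgt (Wj!q0) = x" "ttime (Wj!q0) < l2" using wc[of q0] 3 Suc qx by (simp_all add: tsrc_def ttime_def)
        ultimately have "(b, ttime (Wj!q0), l2) \<in> occupations Wj" "ttime (Wj!q0) < l2"
          using Suc 3 xb by simp_all
        then show False using nb[of "ttime (Wj!q0)" l2] lt lh by linarith
      qed
    qed
    have yb: "y \<noteq> b"
    proof
      assume yb: "y = b"
      show False
      proof (cases "Suc (Suc q) < length Wj")
        case True
        have "(ttgt (Wj!Suc q), ttime (Wj!Suc q), ttime (Wj!Suc (Suc q))) \<in> occupations Wj"
          by (rule occ_idx) (use True in auto)
        moreover have "ttime (Wj!Suc q) < ttime (Wj!Suc (Suc q))" using wc[of "Suc q"] True by auto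
        moreover have "ttgt (Wj!Suc q) = b" using qy yb by (simp add: ttgt_def)
        ultimately have "(b, h2, ttime (Wj!Suc (Suc q))) \<in> occupations Wj" "h2 < ttime (Wj!Suc (Suc q))"
          using 3 by simp_all
        then show False using nb[of h2 "ttime (Wj!Suc (Suc q))"] lt lh by linarith
      next
        case False
        then have "length Wj - 1 = Suc q" using 3 by linarith
        then have "last Wj = Wj!Suc q" using lastW by simp
        then have "(b, h2, h2) \<in> occupations Wj" using occ_last[OF ne] qy yb \<open>tau2 = h2\<close> by (simp add: ttgt_def ttime_def)
        then show False using nb[of h2 h2] lt lh by linarith
      qed
    qed
    have "{x,a} \<in> underlying_edges T E" using walk_edge[OF wj, of q] 3(1) qx \<open>u = a\<close>
      by (simp add: tsrc_def ttgt_def)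
    then have ex: "{a,x} \<in> underlying_edges T E" by (simp add: insert_commute)
    have ey: "{a,y} \<in> underlying_edges T E" using walk_edge[OF wj, of "Suc q"] 3(1) qy \<open>u2 = a\<close>
      by (simp add: tsrc_def ttgt_def)
    have "x = y" using line_nb[OF line ex ey eab xb yb] .
    then have "Suc q < length Wj \<and> Wj!q = (x,a,l2) \<and> Wj!Suc q = (a,x,h2) \<and> l2 < h2"
      using 3(1) qx qy \<open>u = a\<close> \<open>tau = l2\<close> \<open>u2 = a\<close> \<open>tau2 = h2\<close> lh by simp
    then show ?thesis by blast
  qed
qed



lemma occ_le:
  assumes w: "temporal_walk V T E s z W" and o: "(v,l,h) \<in> occupations W"
  shows "l \<le> h"
proof -
  have wc: "\<And>i. Suc i < length W \<Longrightarrow> ttime (W!i) < ttime (W!Suc i)"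
    using w unfolding temporal_walk_def by blast
  show ?thesis using occ_cases[OF o] wc by (auto intro: less_imp_le)
qed

lemma core:
  assumes line: "temporal_line V T E" and sol: "tdw_solution V T E S Ws"
    and opt: "\<And>Ws'. tdw_solution V T E S Ws' \<Longrightarrow> total_length Ws \<le> total_length Ws'"
  shows "i < length S \<Longrightarrow> Suc k < length (Ws ! i) \<Longrightarrow> Ws ! i ! k = (a, b, t) \<Longrightarrow>
    Ws ! i ! Suc k = (b, a, t') \<Longrightarrow> t < t' \<Longrightarrow>
    \<exists>J j a' t'' p. J \<subseteq> {..<length S} \<and> i \<in> J \<and> j \<in> J \<and> j \<noteq> i \<and> t < t'' \<and> t'' < t' \<and>
      ((fst (S!j), a', t'') \<in> set (Ws!j) \<or> (a', snd (S!j), t'') \<in> set (Ws!j)) \<and>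
      upath T E p a a' \<and> length p \<le> card J \<and>
      (\<forall>m\<in>J. m = i \<or> (\<exists>v lm hm. (v,lm,hm) \<in> occupations (Ws!m) \<and> t < lm \<and> hm < t'))"
proof (induction "t' - t" arbitrary: i k a b t t' rule: less_induct)
  case less
  have walks: "\<And>j. j < length S \<Longrightarrow> temporal_walk V T E (fst (S ! j)) (snd (S ! j)) (Ws ! j)"
    using sol unfolding tdw_solution_def by blast
  have disj: "\<And>p q. p < length S \<Longrightarrow> q < length S \<Longrightarrow> p \<noteq> q \<Longrightarrow> temporally_disjoint (Ws ! p) (Ws ! q)"
    using sol unfolding tdw_solution_def by blast
  have wi: "temporal_walk V T E (fst (S!i)) (snd (S!i)) (Ws!i)" using walks less.prems(1) .
  obtain j l2 h2 where j: "j < length S" "j \<noteq> i" and o: "(a,l2,h2) \<in> occupations (Ws!j)" "t < l2" "h2 < t'"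
    using conflict[OF sol opt less.prems(1-4)] by blast
  have wj: "temporal_walk V T E (fst (S!j)) (snd (S!j)) (Ws!j)" using walks j(1) .
  have dis: "temporally_disjoint (Ws!i) (Ws!j)" using disj less.prems(1) j by auto
  have ob: "(b,t,t') \<in> occupations (Ws!i)"
    using occ_idx[OF less.prems(2)] less.prems(3,4) by (simp add: tsrc_def ttgt_def ttime_def)
  from analyse[OF line wi less.prems(2-4) wj dis o] show ?case
  proof
    assume "\<exists>x l. t < l \<and> l < t' \<and> {a,x} \<in> underlying_edges T E \<and> ((fst (S!j),x,l) \<in> set (Ws!j) \<or> (x,snd (S!j),l) \<in> set (Ws!j))"
    then obtain x l where xl: "t < l" "l < t'" "{a,x} \<in> underlying_edges T E"
      "(fst (S!j),x,l) \<in> set (Ws!j) \<or> (x,snd (S!j),l) \<in> set (Ws!j)" by blast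
    have "{i,j} \<subseteq> {..<length S}" using less.prems(1) j by auto
    moreover have "card {i,j} = 2" using j by simp
    moreover have "upath T E [a,x] a x" using upath_edge[OF xl(3)] .
    moreover have "\<forall>m\<in>{i,j}. m = i \<or> (\<exists>v lm hm. (v,lm,hm) \<in> occupations (Ws!m) \<and> t < lm \<and> hm < t')"
      using o by blast
    ultimately show ?thesis using xl j
      by (intro exI[of _ "{i,j}"] exI[of _ j] exI[of _ x] exI[of _ l] exI[of _ "[a,x]"]) auto
  next
    assume "\<exists>q x. Suc q < length (Ws!j) \<and> Ws!j!q = (x,a,l2) \<and> Ws!j!Suc q = (a,x,h2) \<and> l2 < h2"
    then obtain q x where q: "Suc q < length (Ws!j)" "Ws!j!q = (x,a,l2)" "Ws!j!Suc q = (a,x,h2)" "l2 < h2"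
      by blast
    have lt: "h2 - l2 < t' - t" using o q(4) by linarith
    obtain J j1 a' t'' p where IH: "J \<subseteq> {..<length S}" "j \<in> J" "j1 \<in> J" "j1 \<noteq> j" "l2 < t''" "t'' < h2"
      "(fst (S!j1), a', t'') \<in> set (Ws!j1) \<or> (a', snd (S!j1), t'') \<in> set (Ws!j1)"
      "upath T E p x a'" "length p \<le> card J"
      "\<forall>m\<in>J. m = j \<or> (\<exists>v lm hm. (v,lm,hm) \<in> occupations (Ws!m) \<and> l2 < lm \<and> hm < h2)"
      using less.hyps[OF lt j(1) q(1) q(2) q(3) q(4)] by blast
    have ni: "i \<notin> J"
    proof
      assume iJ: "i \<in> J"
      obtain v lm hm where "(v,lm,hm) \<in> occupations (Ws!i)" "l2 < lm" "hm < h2"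
        using IH(10)[rule_format, OF iJ] j(2) by auto
      moreover have "lm \<le> hm" using occ_le[OF wi] calculation(1) .
      ultimately show False using occ_nonest[OF wi ob less.prems(5), of v lm hm] o by linarith
    qed
    have fin: "finite J" using IH(1) finite_subset by blast
    have "{x,a} \<in> underlying_edges T E" using walk_edge[OF wj q(1)[THEN Suc_lessD]] q(2)
      by (simp add: tsrc_def ttgt_def)
    then have "{a,x} \<in> underlying_edges T E" by (simp add: insert_commute)
    then have up: "upath T E (a#p) a a'" by (rule upath_cons[OF IH(8)])
    have cd: "length (a#p) \<le> card (insert i J)" using IH(9) fin ni by simp
    have inv: "\<forall>m\<in>insert i J. m = i \<or> (\<exists>v lm hm. (v,lm,hm) \<in> occupations (Ws!m) \<and> t < lm \<and> hm < t')"
    proof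
      fix m assume m: "m \<in> insert i J"
      show "m = i \<or> (\<exists>v lm hm. (v,lm,hm) \<in> occupations (Ws!m) \<and> t < lm \<and> hm < t')"
      proof (cases "m = i")
        case False
        then have "m \<in> J" using m by simp
        then consider "m = j" | "\<exists>v lm hm. (v,lm,hm) \<in> occupations (Ws!m) \<and> l2 < lm \<and> hm < h2"
          using IH(10) by blast
        then show ?thesis
        proof cases
          case 1 then show ?thesis using o by blast
        next
          case 2 then show ?thesis using o q(4) by (meson less_trans)
        qed
      qed simp
    qed
    have "insert i J \<subseteq> {..<length S}" using IH(1) less.prems(1) by simp
    moreover have "j1 \<noteq> i" using IH(3) ni by blast
    ultimately show ?thesis using IH(3,5,6,7) up cd inv o q(4)
      by (intro exI[of _ "insert i J"] exI[of _ j1] exI[of _ a'] exI[of _ t''] exI[of _ "a#p"]) auto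
  qed
qed

theorem mainTheorem7:
  fixes V :: "'a set" and T :: nat and E :: "nat \<Rightarrow> 'a set set"
    and S :: "('a \<times> 'a) list" and Ws :: "'a transition list list"
  assumes line: "temporal_line V T E"
    and sol: "tdw_solution V T E S Ws"
    and opt: "\<And>Ws'. tdw_solution V T E S Ws' \<Longrightarrow> total_length Ws \<le> total_length Ws'"
    and i: "i < length S"
    and k: "Suc k < length (Ws ! i)"
    and tr1: "Ws ! i ! k = (a, b, t)"
    and tr2: "Ws ! i ! Suc k = (b, a, t')"
    and tt: "t < t'"
  shows "\<exists>j < length S. j \<noteq> i \<and> Ws ! j \<noteq> Ws ! i \<and>
           (\<exists>a' t''. t < t'' \<and> t'' < t' \<and> underlying_dist T E a a' \<le> length S \<and>
              ((fst (S ! j), a', t'') \<in> set (Ws ! j) \<or> (a', snd (S ! j), t'') \<in> set (Ws ! j)))"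
proof -
  obtain J j a' t'' p where c: "J \<subseteq> {..<length S}" "j \<in> J" "j \<noteq> i" "t < t''" "t'' < t'"
      "(fst (S!j), a', t'') \<in> set (Ws!j) \<or> (a', snd (S!j), t'') \<in> set (Ws!j)"
      "upath T E p a a'" "length p \<le> card J"
    using core[OF line sol opt i k tr1 tr2 tt] by blast
  have jl: "j < length S" using c(1,2) by auto
  have "card J \<le> length S" using card_mono[OF _ c(1)] by simp
  then have d: "underlying_dist T E a a' \<le> length S" using upath_dist[OF c(7)] c(8) by linarith
  have ne: "Ws ! j \<noteq> Ws ! i"
  proof
    assume eq: "Ws ! j = Ws ! i"
    have dis: "temporally_disjoint (Ws ! i) (Ws ! j)" using sol i jl c(3) unfolding tdw_solution_def by blast
    have wne: "Ws ! i \<noteq> []" using k by auto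
    show False using td_elim[OF dis occ_hd[OF wne], of "ttime (hd (Ws!i))" "ttime (hd (Ws!i))"] occ_hd[OF wne] eq by simp
  qed
  show ?thesis using jl c(3) ne c(4,5,6) d by blast
qed


end
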